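(* Let $H\in(1/2,1)$, $\alpha\in(1-H,1)$, $T>0$, $N\ge2$, $h=T/N$, $t_n=nh$. Then there is a constant $C$ (independent of $N$) such that for all $\eta\in[0,T]$, $1\le j\le N$ and $\tau\in(t_{j-1},t_j]$, $$\int_0^\eta\!\int_{t_{j-1}}^\tau(\eta-r)^{\alpha-1}(\tau-v)^{\alpha-1}|v-r|^{2H-2}\,\mathrm dv\,\mathrm dr\le C\mathcal R_{H,\alpha}(h),$$ $$\int_0^\eta\!\int_0^{t_{j-1}}(\eta-r)^{\alpha-1}\big((t_{j-1}-v)^{\alpha-1}-(\tau-v)^{\alpha-1}\big)|v-r|^{2H-2}\,\mathrm dv\,\mathrm dr\le C\mathcal R_{H,\alpha}(h).$$
   Context: $\mathcal R_{H,\alpha}(h)=h^{2(H+\alpha-1)}$ if $\alpha\in(1-H,2-2H)$, $\mathcal R_{H,\alpha}(h)=(|\ln h|\vee\ln T)h^{2-2H}$ if $\alpha=2-2H$, and $\mathcal R_{H,\alpha}(h)=h^\alpha$ if $\alpha\in(2-2H,1)$; $a\vee b=\max\{a,b\}$. *)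

theory Defs
  imports "HOL-Analysis.Analysis"
begin

definition rate :: "real \<Rightarrow> real \<Rightarrow> real \<Rightarrow> real \<Rightarrow> real" where
  "rate H \<alpha> T h =
     (if \<alpha> < 2 - 2*H then h powr (2*(H + \<alpha> - 1))
      else if \<alpha> = 2 - 2*H then max \<bar>ln h\<bar> (ln T) * h powr (2 - 2*H)
      else h powr \<alpha>)"

end

theory Submission
  imports Defs
begin

lemma pint0:
  assumes "s > -1" "0 \<le> b"
  shows "(\<integral>\<^sup>+u\<in>{0..b}. ennreal (u powr s) \<partial>lborel) = ennreal (b powr (s+1)/(s+1))"
  using nn_integral_has_integral_lebesgue'[OF _ has_integral_powr_from_0[OF assms]] by simp

lemma pintab:
  assumes "0 < a" "a \<le> b" "s \<noteq> -1"
  shows "(\<integral>\<^sup>+u\<in>{a..b}. ennreal (u powr s) \<partial>lborel) = ennreal ((b powr (s+1) - a powr (s+1))/(s+1))"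
proof -
  have "((\<lambda>u. u powr s) has_integral ((\<lambda>u. u powr (s+1)/(s+1)) b - (\<lambda>u. u powr (s+1)/(s+1)) a)) {a..b}"
  proof (rule fundamental_theorem_of_calculus)
    fix x assume "x \<in> {a..b}"
    hence "x > 0" using assms by auto
    have "((\<lambda>u. u powr (s+1)/(s+1)) has_real_derivative ((s+1) * x powr (s+1-1))/(s+1)) (at x)"
      by (intro derivative_eq_intros) (use \<open>x>0\<close> assms in auto)
    moreover have "((s+1) * x powr (s+1-1))/(s+1) = x powr s" using assms by simp
    ultimately show "((\<lambda>u. u powr (s+1)/(s+1)) has_vector_derivative x powr s) (at x within {a..b})"
      by (simp add: has_real_derivative_iff_has_vector_derivative[symmetric] has_field_derivative_at_within)
  qed (use assms in auto)
  from nn_integral_has_integral_lebesgue'[OF _ this] show ?thesis by (simp add: diff_divide_distrib)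
qed

lemma pintln:
  assumes "0 < a" "a \<le> b"
  shows "(\<integral>\<^sup>+u\<in>{a..b}. ennreal (u powr -1) \<partial>lborel) = ennreal (ln b - ln a)"
proof -
  have "((\<lambda>u. u powr -1) has_integral (ln b - ln a)) {a..b}"
  proof (rule fundamental_theorem_of_calculus)
    fix x assume "x \<in> {a..b}"
    hence "x > 0" using assms by auto
    have "(ln has_real_derivative inverse x) (at x)"
      using DERIV_ln[OF \<open>x>0\<close>] .
    moreover have "inverse x = x powr -1" using \<open>x>0\<close> by (simp add: powr_minus)
    ultimately show "(ln has_vector_derivative x powr -1) (at x within {a..b})"
      by (simp add: has_real_derivative_iff_has_vector_derivative[symmetric] has_field_derivative_at_within)
  qed (use assms in auto)
  from nn_integral_has_integral_lebesgue'[OF _ this] show ?thesis by simp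
qed

locale kern =
  fixes p q h T :: real
  assumes p0: "0 < p" and p1: "p < 1" and q0: "0 < q" and q1: "q < 1" and pq: "2*p + q < 2"
    and h0: "0 < h" and hT: "h \<le> T"
begin

definition k :: "real \<Rightarrow> real" where "k z = z powr -q"
definition g :: "real \<Rightarrow> real" where "g x = x powr -p"
definition f :: "real \<Rightarrow> real" where "f y = y powr -p * min 1 (h/y)"

lemma meas_k[measurable]: "k \<in> borel_measurable borel" unfolding k_def by measurable
lemma meas_g[measurable]: "g \<in> borel_measurable borel" unfolding g_def by measurable
lemma meas_f[measurable]: "f \<in> borel_measurable borel" unfolding f_def by measurable

definition LA :: "real \<Rightarrow> ennreal" where
  "LA D = (\<integral>\<^sup>+y\<in>{0..T}. ennreal (f y * k (max y (D/2))) \<partial>lborel)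
        + 2 * (\<integral>\<^sup>+z\<in>{0..T}. ennreal (f (max z (D/2)) * k z) \<partial>lborel)"

lemma meas_LA[measurable]: "LA \<in> borel_measurable borel"
  unfolding LA_def by measurable

end

context kern begin

lemma k_nn: "0 \<le> k z" unfolding k_def by simp
lemma g_nn: "0 \<le> g z" unfolding g_def by simp
lemma f_nn: "z \<ge> 0 \<Longrightarrow> 0 \<le> f z" unfolding f_def using h0 by simp
lemma k0: "k 0 = 0" unfolding k_def by simp
lemma g0: "g 0 = 0" unfolding g_def by simp
lemma f0: "f 0 = 0" unfolding f_def by simp

lemma k_anti: "0 < a \<Longrightarrow> a \<le> b \<Longrightarrow> k b \<le> k a"
  unfolding k_def using q0 by (intro powr_mono2') auto
lemma g_anti: "0 < a \<Longrightarrow> a \<le> b \<Longrightarrow> g b \<le> g a"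
  unfolding g_def using p0 by (intro powr_mono2') auto
lemma f_anti: "0 < a \<Longrightarrow> a \<le> b \<Longrightarrow> f b \<le> f a"
  unfolding f_def
proof (rule mult_mono)
  assume "0 < a" "a \<le> b"
  show "b powr - p \<le> a powr - p" using p0 \<open>0<a\<close> \<open>a \<le> b\<close> by (intro powr_mono2') auto
  show "min 1 (h / b) \<le> min 1 (h / a)" using h0 \<open>0<a\<close> \<open>a \<le> b\<close>
    by (intro min.mono) (auto intro: divide_left_mono)
  show "0 \<le> a powr - p" by simp
  show "0 \<le> min 1 (h / b)" using h0 \<open>0<a\<close> \<open>a \<le> b\<close> by simp
qed

lemma f_small: "0 \<le> y \<Longrightarrow> y \<le> h \<Longrightarrow> f y = y powr -p"
  unfolding f_def by (cases "y = 0") auto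

lemma f_large: "h \<le> y \<Longrightarrow> f y = h * y powr (-p-1)"
proof -
  assume "h \<le> y"
  hence "y > 0" using h0 by simp
  hence "min 1 (h/y) = h/y" using \<open>h \<le> y\<close> by simp
  thus ?thesis unfolding f_def using \<open>y>0\<close> by (simp add: powr_diff powr_minus divide_simps)
qed

lemma f_half: "0 < x \<Longrightarrow> f (x/2) \<le> 2 powr (p+1) * f x"
proof -
  assume x: "0 < x"
  have "(x/2) powr -p = 2 powr p * x powr -p" using x by (simp add: powr_divide powr_minus divide_simps)
  moreover have "min 1 (h/(x/2)) \<le> 2 * min 1 (h/x)" using x h0 by (auto simp: min_def field_simps)
  ultimately have "f (x/2) \<le> 2 powr p * x powr -p * (2 * min 1 (h/x))"
    unfolding f_def by (simp only:) (intro mult_left_mono, auto)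
  also have "\<dots> = 2 powr (p+1) * f x" unfolding f_def by (simp add: powr_add)
  finally show ?thesis .
qed

lemma w_le_f:
  assumes y: "0 \<le> y" and d: "0 < d" "d \<le> h"
  shows "y powr -p - (y + d) powr -p \<le> f y"
proof (cases "y = 0")
  case True thus ?thesis using d by (simp add: f0)
next
  case False
  hence y0: "y > 0" using y by simp
  define t where "t = y / (y+d)"
  have t: "0 < t" "t \<le> 1" using y0 d by (auto simp: t_def)
  have "t \<le> t powr p" using t p0 p1 powr_mono'[of p 1 t] by simp
  have "(y + d) powr -p = y powr -p * t powr p"
    using y0 d by (simp add: t_def powr_divide powr_minus divide_simps)
  hence "y powr -p - (y + d) powr -p \<le> y powr -p * (1 - t)"
    using \<open>t \<le> t powr p\<close> mult_right_mono[OF \<open>t \<le> t powr p\<close>, of "y powr -p"] by (simp add: algebra_simps)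
  also have "1 - t = d / (y + d)" using y0 d by (simp add: t_def field_simps)
  also have "d/(y+d) \<le> min 1 (h/y)" using y0 d by (auto simp: frac_le)
  hence "y powr -p * (d/(y+d)) \<le> f y" unfolding f_def by (intro mult_left_mono) auto
  finally show ?thesis .
qed

end

lemma refl_int:
  fixes F :: "real \<Rightarrow> ennreal"
  assumes [measurable]: "F \<in> borel_measurable borel"
  shows "(\<integral>\<^sup>+v. F (c - v) * indicator {c-L..c} v \<partial>lborel) = (\<integral>\<^sup>+y. F y * indicator {0..L} y \<partial>lborel)"
proof -
  have "(\<integral>\<^sup>+y. F y * indicator {0..L} y \<partial>lborel) = (\<integral>\<^sup>+x. F (c + -1 * x) * indicator {0..L} (c + -1 * x) \<partial>lborel)"
    using nn_integral_real_affine[where f="\<lambda>y. F y * indicator {0..L} y" and c="-1" and t=c] by simp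
  also have "\<dots> = (\<integral>\<^sup>+v. F (c - v) * indicator {c-L..c} v \<partial>lborel)"
    by (intro nn_integral_cong) (auto simp: indicator_def)
  finally show ?thesis by simp
qed

lemma shift_int:
  fixes F :: "real \<Rightarrow> ennreal"
  assumes [measurable]: "F \<in> borel_measurable borel"
  shows "(\<integral>\<^sup>+v. F (v - c) * indicator {c..c+L} v \<partial>lborel) = (\<integral>\<^sup>+y. F y * indicator {0..L} y \<partial>lborel)"
proof -
  have "(\<integral>\<^sup>+y. F y * indicator {0..L} y \<partial>lborel) = (\<integral>\<^sup>+x. F (-c + 1 * x) * indicator {0..L} (-c + 1 * x) \<partial>lborel)"
    using nn_integral_real_affine[where f="\<lambda>y. F y * indicator {0..L} y" and c="1" and t="-c"] by simp
  also have "\<dots> = (\<integral>\<^sup>+v. F (v - c) * indicator {c..c+L} v \<partial>lborel)"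
    by (intro nn_integral_cong) (auto simp: indicator_def)
  finally show ?thesis by simp
qed

lemma sym_int:
  fixes F :: "real \<Rightarrow> ennreal"
  assumes [measurable]: "F \<in> borel_measurable borel"
  shows "(\<integral>\<^sup>+v. F \<bar>v - c\<bar> * indicator {c-L..c+L} v \<partial>lborel) \<le> 2 * (\<integral>\<^sup>+y. F y * indicator {0..L} y \<partial>lborel)"
proof -
  have "(\<integral>\<^sup>+v. F \<bar>v - c\<bar> * indicator {c-L..c+L} v \<partial>lborel)
     \<le> (\<integral>\<^sup>+v. F (c - v) * indicator {c-L..c} v + F (v - c) * indicator {c..c+L} v \<partial>lborel)"
    by (intro nn_integral_mono) (auto simp: indicator_def)
  also have "\<dots> = (\<integral>\<^sup>+v. F (c - v) * indicator {c-L..c} v \<partial>lborel) + (\<integral>\<^sup>+v. F (v - c) * indicator {c..c+L} v \<partial>lborel)"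
    by (rule nn_integral_add) auto
  also have "\<dots> = 2 * (\<integral>\<^sup>+y. F y * indicator {0..L} y \<partial>lborel)"
    by (simp add: refl_int shift_int mult_2)
  finally show ?thesis .
qed

lemma three_ennreal: "x + 2 * x = 3 * (x::ennreal)"
proof -
  have "3 * x = (1 + 2) * x" by simp
  also have "\<dots> = x + 2 * x" by (simp only: distrib_right mult_1)
  finally show ?thesis by simp
qed

context kern begin

lemma trick1:
  assumes y: "0 \<le> y" and z: "0 \<le> z" and D: "D \<le> y + z"
  shows "f y * k z \<le> f y * k (max y (D/2)) + f (max z (D/2)) * k z"
proof (cases "y \<le> z")
  case True
  show ?thesis
  proof (cases "y = 0")
    case True thus ?thesis using f0 f_nn k_nn z by (simp add: mult_nonneg_nonneg)
  next
    case False
    hence "k z \<le> k (max y (D/2))" using y True D by (intro k_anti) auto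
    hence "f y * k z \<le> f y * k (max y (D/2))" using f_nn[OF y] by (rule mult_left_mono)
    moreover have "0 \<le> f (max z (D/2)) * k z" using f_nn k_nn z by simp
    ultimately show ?thesis by linarith
  qed
next
  case False
  show ?thesis
  proof (cases "z = 0")
    case True thus ?thesis using f0 f_nn k_nn y k0 by simp
  next
    case False2: False
    hence "f y \<le> f (max z (D/2))" using z False D by (intro f_anti) auto
    hence "f y * k z \<le> f (max z (D/2)) * k z" using k_nn by (rule mult_right_mono)
    moreover have "0 \<le> f y * k (max y (D/2))" using f_nn k_nn y by simp
    ultimately show ?thesis by linarith
  qed
qed

lemma inner_bound:
  assumes lo: "0 \<le> lo" "lo \<le> c" "c \<le> T" and r: "0 \<le> r" "r \<le> T"
  shows "(\<integral>\<^sup>+v. ennreal (f (c-v) * k \<bar>v-r\<bar>) * indicator {lo..c} v \<partial>lborel) \<le> LA \<bar>c - r\<bar>"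
proof -
  define D where "D = \<bar>c - r\<bar>"
  define F1 where "F1 = (\<lambda>y. ennreal (f y * k (max y (D/2))))"
  define F2 where "F2 = (\<lambda>z. ennreal (f (max z (D/2)) * k z))"
  have [measurable]: "F1 \<in> borel_measurable borel" "F2 \<in> borel_measurable borel"
    unfolding F1_def F2_def by measurable
  have "(\<integral>\<^sup>+v. ennreal (f (c-v) * k \<bar>v-r\<bar>) * indicator {lo..c} v \<partial>lborel)
     \<le> (\<integral>\<^sup>+v. F1 (c - v) * indicator {c-T..c} v + F2 \<bar>v - r\<bar> * indicator {r-T..r+T} v \<partial>lborel)"
  proof (intro nn_integral_mono)
    fix v
    show "ennreal (f (c-v) * k \<bar>v-r\<bar>) * indicator {lo..c} v
       \<le> F1 (c - v) * indicator {c-T..c} v + F2 \<bar>v - r\<bar> * indicator {r-T..r+T} v"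
    proof (cases "v \<in> {lo..c}")
      case True
      hence i: "v \<in> {c-T..c}" "v \<in> {r-T..r+T}" using lo r by auto
      have "f (c-v) * k \<bar>v-r\<bar> \<le> f (c-v) * k (max (c-v) (D/2)) + f (max \<bar>v-r\<bar> (D/2)) * k \<bar>v-r\<bar>"
        using True by (intro trick1) (auto simp: D_def)
      hence "ennreal (f (c-v) * k \<bar>v-r\<bar>) \<le> ennreal (f (c-v) * k (max (c-v) (D/2)) + f (max \<bar>v-r\<bar> (D/2)) * k \<bar>v-r\<bar>)"
        by (rule ennreal_leI)
      also have "\<dots> = F1 (c - v) + F2 \<bar>v - r\<bar>"
        unfolding F1_def F2_def using True f_nn k_nn by (intro ennreal_plus) auto
      finally have "ennreal (f (c-v) * k \<bar>v-r\<bar>) \<le> F1 (c - v) + F2 \<bar>v - r\<bar>" .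
      thus ?thesis using True i by simp
    qed simp
  qed
  also have "\<dots> = (\<integral>\<^sup>+v. F1 (c - v) * indicator {c-T..c} v \<partial>lborel) + (\<integral>\<^sup>+v. F2 \<bar>v - r\<bar> * indicator {r-T..r+T} v \<partial>lborel)"
    by (rule nn_integral_add) auto
  also have "\<dots> \<le> (\<integral>\<^sup>+y. F1 y * indicator {0..T} y \<partial>lborel) + 2 * (\<integral>\<^sup>+y. F2 y * indicator {0..T} y \<partial>lborel)"
    by (intro add_mono sym_int) (simp_all add: refl_int)
  also have "\<dots> = LA D" unfolding LA_def F1_def F2_def by simp
  finally show ?thesis by (simp add: D_def)
qed

lemma LA_anti: "0 < a \<Longrightarrow> a \<le> b \<Longrightarrow> LA b \<le> LA a"
  unfolding LA_def
proof (intro add_mono mult_left_mono nn_integral_mono)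
  fix x assume ab: "0 < a" "a \<le> b"
  show "ennreal (f x * k (max x (b/2))) * indicator {0..T} x \<le> ennreal (f x * k (max x (a/2))) * indicator {0..T} x"
  proof (cases "x \<in> {0..T}")
    case True
    have "k (max x (b/2)) \<le> k (max x (a/2))" using ab by (intro k_anti) auto
    hence "f x * k (max x (b/2)) \<le> f x * k (max x (a/2))" using f_nn True by (intro mult_left_mono) auto
    thus ?thesis using True by (simp add: ennreal_leI)
  qed simp
  show "ennreal (f (max x (b/2)) * k x) * indicator {0..T} x \<le> ennreal (f (max x (a/2)) * k x) * indicator {0..T} x"
  proof (cases "x \<in> {0..T}")
    case True
    have "f (max x (b/2)) \<le> f (max x (a/2))" using ab by (intro f_anti) auto
    hence "f (max x (b/2)) * k x \<le> f (max x (a/2)) * k x" using k_nn by (intro mult_right_mono) auto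
    thus ?thesis using True by (simp add: ennreal_leI)
  qed simp
qed simp

lemma outer_bound:
  assumes e: "0 \<le> \<eta>" "\<eta> \<le> T" and c: "0 \<le> c" "c \<le> T"
  shows "(\<integral>\<^sup>+r. ennreal (g (\<eta> - r)) * LA \<bar>c - r\<bar> * indicator {0..\<eta>} r \<partial>lborel)
     \<le> 3 * (\<integral>\<^sup>+x. ennreal (g x) * LA x * indicator {0..T} x \<partial>lborel)"
proof -
  define F where "F = (\<lambda>x. ennreal (g x) * LA x)"
  have [measurable]: "F \<in> borel_measurable borel" unfolding F_def by measurable
  have "(\<integral>\<^sup>+r. ennreal (g (\<eta> - r)) * LA \<bar>c - r\<bar> * indicator {0..\<eta>} r \<partial>lborel)
     \<le> (\<integral>\<^sup>+r. F (\<eta> - r) * indicator {\<eta>-T..\<eta>} r + F \<bar>r - c\<bar> * indicator {c-T..c+T} r \<partial>lborel)"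
  proof (intro nn_integral_mono_AE eventually_mono[OF AE_lborel_singleton[of c]] impI)
    fix r assume "r \<noteq> c"
    show "ennreal (g (\<eta> - r)) * LA \<bar>c - r\<bar> * indicator {0..\<eta>} r
       \<le> F (\<eta> - r) * indicator {\<eta>-T..\<eta>} r + F \<bar>r - c\<bar> * indicator {c-T..c+T} r"
    proof (cases "r \<in> {0..\<eta>}")
      case True
      hence i: "r \<in> {\<eta>-T..\<eta>}" "r \<in> {c-T..c+T}" using e c by auto
      have z: "0 < \<bar>c - r\<bar>" using \<open>r \<noteq> c\<close> by simp
      have "ennreal (g (\<eta> - r)) * LA \<bar>c - r\<bar> \<le> F (\<eta> - r) + F \<bar>r - c\<bar>"
      proof (cases "\<eta> - r \<le> \<bar>c - r\<bar>")
        case True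
        show ?thesis
        proof (cases "\<eta> - r = 0")
          case True thus ?thesis by (simp add: g0)
        next
          case False
          hence "LA \<bar>c - r\<bar> \<le> LA (\<eta> - r)" using \<open>\<eta> - r \<le> \<bar>c - r\<bar>\<close> \<open>r \<in> {0..\<eta>}\<close> by (intro LA_anti) auto
          hence "ennreal (g (\<eta> - r)) * LA \<bar>c - r\<bar> \<le> F (\<eta> - r)" unfolding F_def by (rule mult_left_mono) simp
          thus ?thesis by (simp add: add_increasing2)
        qed
      next
        case False
        hence "g (\<eta> - r) \<le> g \<bar>c - r\<bar>" using z by (intro g_anti) auto
        hence "ennreal (g (\<eta> - r)) * LA \<bar>c - r\<bar> \<le> F \<bar>r - c\<bar>" unfolding F_def abs_minus_commute[of r c]
          by (intro mult_right_mono) (auto simp: ennreal_leI)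
        thus ?thesis by (simp add: add_increasing)
      qed
      thus ?thesis using True i by simp
    qed simp
  qed
  also have "\<dots> = (\<integral>\<^sup>+r. F (\<eta> - r) * indicator {\<eta>-T..\<eta>} r \<partial>lborel) + (\<integral>\<^sup>+r. F \<bar>r - c\<bar> * indicator {c-T..c+T} r \<partial>lborel)"
    by (rule nn_integral_add) auto
  also have "\<dots> \<le> (\<integral>\<^sup>+x. F x * indicator {0..T} x \<partial>lborel) + 2 * (\<integral>\<^sup>+x. F x * indicator {0..T} x \<partial>lborel)"
    by (intro add_mono sym_int) (simp_all add: refl_int)
  also have "\<dots> = 3 * (\<integral>\<^sup>+x. F x * indicator {0..T} x \<partial>lborel)"
    by (rule three_ennreal)
  finally show ?thesis unfolding F_def .
qed

end

context kern begin

definition t1 :: "real \<Rightarrow> real \<Rightarrow> ennreal" where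
  "t1 x y = ennreal (if x \<le> 2*y then 3 * g x * f y * k y else 0) * indicator {0..T} x * indicator {0..T} y"
definition t2 :: "real \<Rightarrow> real \<Rightarrow> ennreal" where
  "t2 x y = ennreal (if 2*y < x then 2 powr q * x powr (-p-q) * f y else 0) * indicator {0..T} x * indicator {0..T} y"
definition t3 :: "real \<Rightarrow> real \<Rightarrow> ennreal" where
  "t3 x y = ennreal (if 2*y < x then 2 powr (p+2) * g x * f x * k y else 0) * indicator {0..T} x * indicator {0..T} y"

lemma meas_t: "case_prod t1 \<in> borel_measurable (lborel \<Otimes>\<^sub>M lborel)"
   "case_prod t2 \<in> borel_measurable (lborel \<Otimes>\<^sub>M lborel)"
   "case_prod t3 \<in> borel_measurable (lborel \<Otimes>\<^sub>M lborel)"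
  unfolding t1_def t2_def t3_def by measurable

lemma Phi_split:
  assumes x: "0 \<le> x" "x \<le> T" and y: "0 \<le> y" "y \<le> T"
  shows "g x * (f y * k (max y (x/2)) + 2 * (f (max y (x/2)) * k y))
    \<le> (if x \<le> 2*y then 3 * g x * f y * k y else 0) + (if 2*y < x then 2 powr q * x powr (-p-q) * f y else 0)
      + (if 2*y < x then 2 powr (p+2) * g x * f x * k y else 0)"
proof (cases "x \<le> 2*y")
  case True
  hence "max y (x/2) = y" by simp
  thus ?thesis using True by (simp add: algebra_simps)
next
  case False
  hence x0: "x > 0" and m: "max y (x/2) = x/2" using y by auto
  have "k (x/2) = 2 powr q * x powr -q" unfolding k_def using x0 by (simp add: powr_divide powr_minus divide_simps)
  hence 1: "g x * (f y * k (x/2)) = 2 powr q * x powr (-p-q) * f y" unfolding g_def using x0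
    by (simp add: powr_add[symmetric] algebra_simps)
  have "2 * (f (x/2) * k y) \<le> 2 * (2 powr (p+1) * f x * k y)"
    using f_half[OF x0] k_nn by (intro mult_left_mono mult_right_mono) auto
  also have "\<dots> = 2 powr (p+2) * f x * k y" by (simp add: powr_add)
  finally have "g x * (2 * (f (x/2) * k y)) \<le> g x * (2 powr (p+2) * f x * k y)"
    using g_nn by (intro mult_left_mono) auto
  moreover have "g x * (f y * k (max y (x/2)) + 2 * (f (max y (x/2)) * k y)) = g x * (f y * k (x/2)) + g x * (2 * (f (x/2) * k y))"
    using m by (simp add: distrib_left)
  ultimately have "g x * (f y * k (max y (x/2)) + 2 * (f (max y (x/2)) * k y)) \<le> 2 powr q * x powr (-p-q) * f y + g x * (2 powr (p+2) * f x * k y)"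
    using 1 by linarith
  thus ?thesis using False by (simp add: algebra_simps)
qed

end

context kern begin

lemma LA_expand:
  "ennreal (g x) * LA x = (\<integral>\<^sup>+y. ennreal (g x * (f y * k (max y (x/2)) + 2 * (f (max y (x/2)) * k y))) * indicator {0..T} y \<partial>lborel)"
proof -
  have "ennreal (g x) * LA x = ennreal (g x) * ((\<integral>\<^sup>+y. ennreal (f y * k (max y (x/2))) * indicator {0..T} y \<partial>lborel)
        + (\<integral>\<^sup>+y. 2 * (ennreal (f (max y (x/2)) * k y) * indicator {0..T} y) \<partial>lborel))"
    unfolding LA_def by (subst nn_integral_cmult) auto
  also have "\<dots> = ennreal (g x) * (\<integral>\<^sup>+y. ennreal (f y * k (max y (x/2))) * indicator {0..T} y
        + 2 * (ennreal (f (max y (x/2)) * k y) * indicator {0..T} y) \<partial>lborel)"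
    by (subst nn_integral_add) auto
  also have "\<dots> = (\<integral>\<^sup>+y. ennreal (g x) * (ennreal (f y * k (max y (x/2))) * indicator {0..T} y
        + 2 * (ennreal (f (max y (x/2)) * k y) * indicator {0..T} y)) \<partial>lborel)"
    by (subst nn_integral_cmult) auto
  also have "\<dots> = (\<integral>\<^sup>+y. ennreal (g x * (f y * k (max y (x/2)) + 2 * (f (max y (x/2)) * k y))) * indicator {0..T} y \<partial>lborel)"
  proof (intro nn_integral_cong)
    fix y
    show "ennreal (g x) * (ennreal (f y * k (max y (x/2))) * indicator {0..T} y
        + 2 * (ennreal (f (max y (x/2)) * k y) * indicator {0..T} y)) =
      ennreal (g x * (f y * k (max y (x/2)) + 2 * (f (max y (x/2)) * k y))) * indicator {0..T} y"
    proof (cases "y \<in> {0..T}")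
      case True
      have a: "0 \<le> f y * k (max y (x/2))" "0 \<le> f (max y (x/2)) * k y"
        using True f_nn k_nn by auto
      have "ennreal (g x * (f y * k (max y (x/2)) + 2 * (f (max y (x/2)) * k y)))
          = ennreal (g x) * (ennreal (f y * k (max y (x/2))) + ennreal 2 * ennreal (f (max y (x/2)) * k y))"
      proof -
        have "ennreal (f y * k (max y (x/2)) + 2 * (f (max y (x/2)) * k y)) = ennreal (f y * k (max y (x/2))) + ennreal (2 * (f (max y (x/2)) * k y))"
          using a by (intro ennreal_plus) auto
        also have "ennreal (2 * (f (max y (x/2)) * k y)) = ennreal 2 * ennreal (f (max y (x/2)) * k y)"
          using a by (intro ennreal_mult) auto
        finally show ?thesis using a g_nn by (simp add: ennreal_mult)
      qed
      thus ?thesis using True by simp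
    qed simp
  qed
  finally show ?thesis .
qed

lemma Q_split:
  "(\<integral>\<^sup>+x. ennreal (g x) * LA x * indicator {0..T} x \<partial>lborel)
    \<le> (\<integral>\<^sup>+x. \<integral>\<^sup>+y. t1 x y \<partial>lborel \<partial>lborel) + (\<integral>\<^sup>+x. \<integral>\<^sup>+y. t2 x y \<partial>lborel \<partial>lborel)
      + (\<integral>\<^sup>+x. \<integral>\<^sup>+y. t3 x y \<partial>lborel \<partial>lborel)"
proof -
  have "(\<integral>\<^sup>+x. ennreal (g x) * LA x * indicator {0..T} x \<partial>lborel)
      \<le> (\<integral>\<^sup>+x. (\<integral>\<^sup>+y. t1 x y \<partial>lborel) + (\<integral>\<^sup>+y. t2 x y \<partial>lborel) + (\<integral>\<^sup>+y. t3 x y \<partial>lborel) \<partial>lborel)"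
  proof (intro nn_integral_mono)
    fix x
    show "ennreal (g x) * LA x * indicator {0..T} x
      \<le> (\<integral>\<^sup>+y. t1 x y \<partial>lborel) + (\<integral>\<^sup>+y. t2 x y \<partial>lborel) + (\<integral>\<^sup>+y. t3 x y \<partial>lborel)"
    proof (cases "x \<in> {0..T}")
      case True
      have "ennreal (g x) * LA x * indicator {0..T} x = ennreal (g x) * LA x" using True by simp
      also have "\<dots> \<le> (\<integral>\<^sup>+y. t1 x y + t2 x y + t3 x y \<partial>lborel)"
        unfolding LA_expand
      proof (intro nn_integral_mono)
        fix y
        show "ennreal (g x * (f y * k (max y (x/2)) + 2 * (f (max y (x/2)) * k y))) * indicator {0..T} y
           \<le> t1 x y + t2 x y + t3 x y"
        proof (cases "y \<in> {0..T}")
          case yT: True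
          have nn: "0 \<le> (if x \<le> 2*y then 3 * g x * f y * k y else 0)"
             "0 \<le> (if 2*y < x then 2 powr q * x powr (-p-q) * f y else 0)"
             "0 \<le> (if 2*y < x then 2 powr (p+2) * g x * f x * k y else 0)"
            using yT True f_nn g_nn k_nn by auto
          have "ennreal (g x * (f y * k (max y (x/2)) + 2 * (f (max y (x/2)) * k y)))
              \<le> ennreal ((if x \<le> 2*y then 3 * g x * f y * k y else 0) + (if 2*y < x then 2 powr q * x powr (-p-q) * f y else 0)
      + (if 2*y < x then 2 powr (p+2) * g x * f x * k y else 0))"
            using True yT by (intro ennreal_leI Phi_split) auto
          also have "\<dots> = t1 x y + t2 x y + t3 x y"
            unfolding t1_def t2_def t3_def using True yT nn by (simp add: ennreal_plus[symmetric] del: ennreal_plus)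
          finally show ?thesis using yT by simp
        qed (simp add: t1_def t2_def t3_def)
      qed
      also have "\<dots> = (\<integral>\<^sup>+y. t1 x y \<partial>lborel) + (\<integral>\<^sup>+y. t2 x y \<partial>lborel) + (\<integral>\<^sup>+y. t3 x y \<partial>lborel)"
        using meas_t by (simp add: nn_integral_add)
      finally show ?thesis .
    qed (simp)
  qed
  also have "\<dots> = (\<integral>\<^sup>+x. \<integral>\<^sup>+y. t1 x y \<partial>lborel \<partial>lborel) + (\<integral>\<^sup>+x. \<integral>\<^sup>+y. t2 x y \<partial>lborel \<partial>lborel)
      + (\<integral>\<^sup>+x. \<integral>\<^sup>+y. t3 x y \<partial>lborel \<partial>lborel)"
    using meas_t by (simp add: nn_integral_add)
  finally show ?thesis .
qed

end

context kern begin

definition E1 :: ennreal where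
  "E1 = (\<integral>\<^sup>+u. ennreal (f u * u powr (1-p-q)) * indicator {0..T} u \<partial>lborel)"

lemma T1_inner:
  "(\<integral>\<^sup>+x. t1 x y \<partial>lborel) \<le> ennreal (6/(1-p)) * (ennreal (f y * y powr (1-p-q)) * indicator {0..T} y)"
proof (cases "y \<in> {0..T}")
  case True
  note yT = True
  hence y: "0 \<le> y" by auto
  have "(\<integral>\<^sup>+x. t1 x y \<partial>lborel) \<le> (\<integral>\<^sup>+x. ennreal (3 * f y * k y) * (ennreal (x powr -p) * indicator {0..2*y} x) \<partial>lborel)"
  proof (intro nn_integral_mono)
    fix x
    show "t1 x y \<le> ennreal (3 * f y * k y) * (ennreal (x powr -p) * indicator {0..2*y} x)"
    proof (cases "x \<in> {0..T} \<and> x \<le> 2*y")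
      case True
      thus ?thesis unfolding t1_def g_def using y f_nn k_nn yT
        by (simp add: ennreal_mult[symmetric] mult_ac)
    qed (auto simp: t1_def)
  qed
  also have "\<dots> = ennreal (3 * f y * k y) * ennreal ((2*y) powr (-p+1)/(-p+1))"
    using pint0[of "-p" "2*y"] p1 y by (subst nn_integral_cmult) auto
  also have "\<dots> = ennreal (3 * f y * k y * ((2*y) powr (1-p)/(1-p)))"
    using f_nn k_nn y p1 by (simp add: ennreal_mult[symmetric])
  also have "\<dots> \<le> ennreal (6/(1-p) * (f y * y powr (1-p-q)))"
  proof (intro ennreal_leI)
    show "3 * f y * k y * ((2*y) powr (1-p)/(1-p)) \<le> 6/(1-p) * (f y * y powr (1-p-q))"
    proof (cases "y = 0")
      case True thus ?thesis by (simp add: f0)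
    next
      case False
      hence y0: "y > 0" using y by simp
      have e: "k y * (2*y) powr (1-p) = 2 powr (1-p) * y powr (1-p-q)"
        unfolding k_def using y0 by (simp add: powr_mult powr_add[symmetric] algebra_simps)
      have "2 powr (1-p) \<le> 2 powr 1" using p0 by (intro powr_mono) auto
      hence "2 powr (1-p) * (f y * y powr (1-p-q)) \<le> 2 * (f y * y powr (1-p-q))"
        using f_nn y by (intro mult_right_mono) auto
      have "3 * f y * k y * ((2*y) powr (1-p)/(1-p)) = 3/(1-p) * (f y * (k y * (2*y) powr (1-p)))"
        by (simp add: field_simps)
      also have "\<dots> = 3/(1-p) * (2 powr (1-p) * (f y * y powr (1-p-q)))" unfolding e by (simp add: mult_ac)
      also have "\<dots> \<le> 3/(1-p) * (2 * (f y * y powr (1-p-q)))"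
        using \<open>2 powr (1-p) * (f y * y powr (1-p-q)) \<le> 2 * (f y * y powr (1-p-q))\<close> p1
        by (intro mult_left_mono) auto
      also have "\<dots> = 6/(1-p) * (f y * y powr (1-p-q))" by simp
      finally show ?thesis .
    qed
  qed
  also have "\<dots> = ennreal (6/(1-p)) * (ennreal (f y * y powr (1-p-q)) * indicator {0..T} y)"
    using True by (subst ennreal_mult) (use p1 f_nn[OF y] in auto)
  finally show ?thesis .
qed (simp add: t1_def)

lemma T1_bound: "(\<integral>\<^sup>+x. \<integral>\<^sup>+y. t1 x y \<partial>lborel \<partial>lborel) \<le> ennreal (6/(1-p)) * E1"
proof -
  have "(\<integral>\<^sup>+x. \<integral>\<^sup>+y. t1 x y \<partial>lborel \<partial>lborel) = (\<integral>\<^sup>+y. \<integral>\<^sup>+x. t1 x y \<partial>lborel \<partial>lborel)"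
    by (rule lborel_pair.Fubini'[OF meas_t(1), symmetric])
  also have "\<dots> \<le> (\<integral>\<^sup>+y. ennreal (6/(1-p)) * (ennreal (f y * y powr (1-p-q)) * indicator {0..T} y) \<partial>lborel)"
    by (intro nn_integral_mono T1_inner)
  also have "\<dots> = ennreal (6/(1-p)) * E1" unfolding E1_def by (subst nn_integral_cmult) auto
  finally show ?thesis .
qed

lemma T3_inner:
  "(\<integral>\<^sup>+y. t3 x y \<partial>lborel) \<le> ennreal (2 powr (p+2)/(1-q)) * (ennreal (f x * x powr (1-p-q)) * indicator {0..T} x)"
proof (cases "x \<in> {0..T}")
  case True
  note xT = True
  hence x: "0 \<le> x" by auto
  have "(\<integral>\<^sup>+y. t3 x y \<partial>lborel) \<le> (\<integral>\<^sup>+y. ennreal (2 powr (p+2) * g x * f x) * (ennreal (y powr -q) * indicator {0..x} y) \<partial>lborel)"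
  proof (intro nn_integral_mono)
    fix y
    show "t3 x y \<le> ennreal (2 powr (p+2) * g x * f x) * (ennreal (y powr -q) * indicator {0..x} y)"
    proof (cases "y \<in> {0..T} \<and> 2*y < x")
      case True
      thus ?thesis unfolding t3_def k_def using x f_nn g_nn xT
        by (simp add: ennreal_mult[symmetric] mult_ac)
    qed (auto simp: t3_def)
  qed
  also have "\<dots> = ennreal (2 powr (p+2) * g x * f x) * ennreal (x powr (-q+1)/(-q+1))"
    using pint0[of "-q" "x"] q1 x by (subst nn_integral_cmult) auto
  also have "\<dots> = ennreal (2 powr (p+2) * g x * f x * (x powr (1-q)/(1-q)))"
    using f_nn g_nn x q1 by (simp add: ennreal_mult[symmetric])
  also have "\<dots> = ennreal (2 powr (p+2)/(1-q) * (f x * x powr (1-p-q)))"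
  proof (cases "x = 0")
    case True thus ?thesis by (simp add: f0 g0)
  next
    case False
    hence x0: "x > 0" using x by simp
    have eq1: "g x * x powr (1-q) = x powr (1-p-q)" unfolding g_def using x0 by (subst powr_add[symmetric]) (simp add: algebra_simps)
    have eq2: "2 powr (p+2) * g x * f x * (x powr (1-q)/(1-q)) = 2 powr (p+2)/(1-q) * (f x * (g x * x powr (1-q)))"
      by (simp add: field_simps)
    show ?thesis unfolding eq2 eq1 ..
  qed
  also have "\<dots> = ennreal (2 powr (p+2)/(1-q)) * (ennreal (f x * x powr (1-p-q)) * indicator {0..T} x)"
    using True by (subst ennreal_mult) (use q1 f_nn[OF x] in auto)
  finally show ?thesis .
qed (simp add: t3_def)

lemma T3_bound: "(\<integral>\<^sup>+x. \<integral>\<^sup>+y. t3 x y \<partial>lborel \<partial>lborel) \<le> ennreal (2 powr (p+2)/(1-q)) * E1"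
proof -
  have "(\<integral>\<^sup>+x. \<integral>\<^sup>+y. t3 x y \<partial>lborel \<partial>lborel) \<le> (\<integral>\<^sup>+x. ennreal (2 powr (p+2)/(1-q)) * (ennreal (f x * x powr (1-p-q)) * indicator {0..T} x) \<partial>lborel)"
    by (intro nn_integral_mono T3_inner)
  also have "\<dots> = ennreal (2 powr (p+2)/(1-q)) * E1" unfolding E1_def by (subst nn_integral_cmult) auto
  finally show ?thesis .
qed

end

context kern begin

definition P :: "real \<Rightarrow> ennreal" where
  "P e = (\<integral>\<^sup>+u. ennreal (u powr -e) * indicator {h..T} u \<partial>lborel)"

definition X :: real where "X = h powr (2-2*p-q)"

lemma int_small: "(\<integral>\<^sup>+u. ennreal (u powr (1-2*p-q)) * indicator {0..h} u \<partial>lborel) = ennreal (X/(2-2*p-q))"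
proof -
  have "(\<integral>\<^sup>+u. ennreal (u powr (1-2*p-q)) * indicator {0..h} u \<partial>lborel) = ennreal (h powr ((1-2*p-q)+1)/((1-2*p-q)+1))"
    using pint0[of "1-2*p-q" h] pq h0 by simp
  also have "(1-2*p-q)+1 = 2-2*p-q" by simp
  finally show ?thesis unfolding X_def .
qed

lemma E1_bound: "E1 \<le> ennreal (X/(2-2*p-q)) + ennreal h * P (2*p+q)"
proof -
  have "E1 \<le> (\<integral>\<^sup>+u. ennreal (u powr (1-2*p-q)) * indicator {0..h} u + ennreal h * (ennreal (u powr -(2*p+q)) * indicator {h..T} u) \<partial>lborel)"
    unfolding E1_def
  proof (intro nn_integral_mono)
    fix u
    show "ennreal (f u * u powr (1-p-q)) * indicator {0..T} u
       \<le> ennreal (u powr (1-2*p-q)) * indicator {0..h} u + ennreal h * (ennreal (u powr -(2*p+q)) * indicator {h..T} u)"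
    proof (cases "u \<in> {0..T}")
      case True
      show ?thesis
      proof (cases "u \<le> h")
        case uh: True
        have "f u * u powr (1-p-q) \<le> u powr (1-2*p-q)"
        proof (cases "u = 0")
          case False
          hence "u > 0" using True by auto
          thus ?thesis using f_small[of u] True uh by (simp add: powr_add[symmetric] algebra_simps)
        qed (simp add: f0)
        hence "ennreal (f u * u powr (1-p-q)) \<le> ennreal (u powr (1-2*p-q))" by (rule ennreal_leI)
        thus ?thesis using True uh by (simp add: add_increasing2)
      next
        case False
        hence u0: "u > 0" "h \<le> u" using h0 by auto
        have "f u * u powr (1-p-q) = h * u powr -(2*p+q)"
          using f_large[OF u0(2)] u0 by (simp add: powr_add[symmetric] algebra_simps)
        hence "ennreal (f u * u powr (1-p-q)) = ennreal h * ennreal (u powr -(2*p+q))"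
          using h0 by (simp add: ennreal_mult)
        thus ?thesis using True False u0 by (simp add: add_increasing)
      qed
    qed simp
  qed
  also have "\<dots> = ennreal (X/(2-2*p-q)) + ennreal h * P (2*p+q)"
    unfolding P_def int_small[symmetric] by (subst nn_integral_add) (auto simp: nn_integral_cmult)
  finally show ?thesis .
qed

end

context kern begin

definition Fb :: "real \<Rightarrow> real" where
  "Fb x = (if x \<le> h then x powr (1-p)/(1-p) else h powr (1-p) * (1/(1-p) + 1/p))"

lemma Fb_bound:
  assumes x: "0 \<le> x"
  shows "(\<integral>\<^sup>+y. ennreal (if 2*y < x then f y else 0) * indicator {0..T} y \<partial>lborel) \<le> ennreal (Fb x)"
proof (cases "x \<le> h")
  case True
  have "(\<integral>\<^sup>+y. ennreal (if 2*y < x then f y else 0) * indicator {0..T} y \<partial>lborel)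
      \<le> (\<integral>\<^sup>+y. ennreal (y powr -p) * indicator {0..x} y \<partial>lborel)"
  proof (intro nn_integral_mono)
    fix y show "ennreal (if 2*y < x then f y else 0) * indicator {0..T} y \<le> ennreal (y powr -p) * indicator {0..x} y"
      using True f_small[of y] by (auto simp: indicator_def)
  qed
  also have "\<dots> = ennreal (x powr (-p+1)/(-p+1))" using pint0[of "-p" x] p1 x by simp
  finally show ?thesis unfolding Fb_def using True by simp
next
  case False
  have "(\<integral>\<^sup>+y. ennreal (if 2*y < x then f y else 0) * indicator {0..T} y \<partial>lborel)
      \<le> (\<integral>\<^sup>+y. ennreal (y powr -p) * indicator {0..h} y + ennreal h * (ennreal (y powr (-p-1)) * indicator {h..T} y) \<partial>lborel)"
  proof (intro nn_integral_mono)
    fix y show "ennreal (if 2*y < x then f y else 0) * indicator {0..T} y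
      \<le> ennreal (y powr -p) * indicator {0..h} y + ennreal h * (ennreal (y powr (-p-1)) * indicator {h..T} y)"
    proof (cases "y \<in> {0..T}")
      case True
      show ?thesis
      proof (cases "y \<le> h")
        case True
        thus ?thesis using \<open>y \<in> {0..T}\<close> f_small[of y] by (auto simp: indicator_def)
      next
        case False
        thus ?thesis using \<open>y \<in> {0..T}\<close> f_large[of y] h0 by (auto simp: indicator_def ennreal_mult)
      qed
    qed simp
  qed
  also have "\<dots> = ennreal (h powr (-p+1)/(-p+1)) + ennreal h * ennreal ((T powr (-p-1+1) - h powr (-p-1+1))/(-p-1+1))"
    using pint0[of "-p" h] pintab[of h T "-p-1"] p0 p1 h0 hT
    by (subst nn_integral_add) (auto simp: nn_integral_cmult)
  also have "\<dots> \<le> ennreal (Fb x)"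
  proof -
    have a: "(T powr (-p-1+1) - h powr (-p-1+1))/(-p-1+1) = (h powr -p - T powr -p)/p"
      using p0 by (simp add: field_simps)
    have b: "h * ((h powr -p - T powr -p)/p) \<le> h powr (1-p) / p"
    proof -
      have "h * (h powr -p - T powr -p) \<le> h * h powr -p" using h0 by (intro mult_left_mono) auto
      also have "h * h powr -p = h powr (1-p)" using h0 by (simp add: powr_diff powr_minus divide_simps)
      finally show ?thesis using p0 by (simp add: divide_right_mono)
    qed
    have c: "0 \<le> (h powr -p - T powr -p)/p" using p0 h0 hT by (intro divide_nonneg_pos) (auto intro: powr_mono2')
    have "ennreal (h powr (-p+1)/(-p+1)) + ennreal h * ennreal ((T powr (-p-1+1) - h powr (-p-1+1))/(-p-1+1))
        = ennreal (h powr (1-p)/(1-p) + h * ((h powr -p - T powr -p)/p))"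
    proof -
      have e1: "-p+1 = 1-p" by simp
      have "ennreal h * ennreal ((h powr -p - T powr -p)/p) = ennreal (h * ((h powr -p - T powr -p)/p))"
        by (rule ennreal_mult[symmetric]) (use h0 c in auto)
      moreover have "ennreal (h powr (1-p)/(1-p)) + ennreal (h * ((h powr -p - T powr -p)/p))
         = ennreal (h powr (1-p)/(1-p) + h * ((h powr -p - T powr -p)/p))"
        by (rule ennreal_plus[symmetric]) (use h0 c p1 in \<open>auto intro: mult_nonneg_nonneg simp del: times_divide_eq_right\<close>)
      ultimately show ?thesis unfolding a e1 by simp
    qed
    also have "\<dots> \<le> ennreal (Fb x)" unfolding Fb_def using False b by (intro ennreal_leI) (simp add: field_simps)
    finally show ?thesis .
  qed
  finally show ?thesis .
qed

end

context kern begin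

lemma T2_inner:
  "(\<integral>\<^sup>+y. t2 x y \<partial>lborel) \<le> ennreal (2 powr q * x powr (-p-q)) * ennreal (Fb x) * indicator {0..T} x"
proof (cases "x \<in> {0..T}")
  case True
  have "(\<integral>\<^sup>+y. t2 x y \<partial>lborel) = (\<integral>\<^sup>+y. ennreal (2 powr q * x powr (-p-q)) * (ennreal (if 2*y < x then f y else 0) * indicator {0..T} y) \<partial>lborel)"
  proof (intro nn_integral_cong)
    fix y show "t2 x y = ennreal (2 powr q * x powr (-p-q)) * (ennreal (if 2*y < x then f y else 0) * indicator {0..T} y)"
      unfolding t2_def using True f_nn by (cases "y \<in> {0..T}") (auto simp: ennreal_mult)
  qed
  also have "\<dots> = ennreal (2 powr q * x powr (-p-q)) * (\<integral>\<^sup>+y. ennreal (if 2*y < x then f y else 0) * indicator {0..T} y \<partial>lborel)"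
    by (subst nn_integral_cmult) auto
  also have "\<dots> \<le> ennreal (2 powr q * x powr (-p-q)) * ennreal (Fb x)"
    using True by (intro mult_left_mono Fb_bound) auto
  finally show ?thesis using True by simp
qed (simp add: t2_def)

lemma T2_bound: "(\<integral>\<^sup>+x. \<integral>\<^sup>+y. t2 x y \<partial>lborel \<partial>lborel)
  \<le> ennreal (2 powr q/(1-p)) * ennreal (X/(2-2*p-q)) + ennreal (2 powr q * (1/(1-p) + 1/p) * h powr (1-p)) * P (p+q)"
proof -
  have "(\<integral>\<^sup>+x. \<integral>\<^sup>+y. t2 x y \<partial>lborel \<partial>lborel) \<le> (\<integral>\<^sup>+x. ennreal (2 powr q/(1-p)) * (ennreal (x powr (1-2*p-q)) * indicator {0..h} x)
     + ennreal (2 powr q * (1/(1-p) + 1/p) * h powr (1-p)) * (ennreal (x powr -(p+q)) * indicator {h..T} x) \<partial>lborel)"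
  proof (intro nn_integral_mono order.trans[OF T2_inner])
    fix x
    show "ennreal (2 powr q * x powr (-p-q)) * ennreal (Fb x) * indicator {0..T} x
      \<le> ennreal (2 powr q/(1-p)) * (ennreal (x powr (1-2*p-q)) * indicator {0..h} x)
     + ennreal (2 powr q * (1/(1-p) + 1/p) * h powr (1-p)) * (ennreal (x powr -(p+q)) * indicator {h..T} x)"
    proof (cases "x \<in> {0..T}")
      case True
      show ?thesis
      proof (cases "x \<le> h")
        case xh: True
        have "2 powr q * x powr (-p-q) * Fb x \<le> 2 powr q/(1-p) * x powr (1-2*p-q)"
        proof (cases "x = 0")
          case False
          hence "x > 0" using True by auto
          hence "x powr (-p-q) * x powr (1-p) = x powr (1-2*p-q)" by (subst powr_add[symmetric]) (simp add: algebra_simps)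
          thus ?thesis unfolding Fb_def using xh by (simp add: field_simps)
        qed simp
        have Fn: "0 \<le> Fb x" unfolding Fb_def using p0 p1 by auto
        have "ennreal (2 powr q * x powr (-p-q)) * ennreal (Fb x) = ennreal (2 powr q * x powr (-p-q) * Fb x)"
          by (rule ennreal_mult[symmetric]) (use Fn in auto)
        also have "\<dots> \<le> ennreal (2 powr q/(1-p) * x powr (1-2*p-q))" by (rule ennreal_leI) fact
        also have "\<dots> = ennreal (2 powr q/(1-p)) * ennreal (x powr (1-2*p-q))"
          by (rule ennreal_mult) (use p1 in auto)
        finally have "ennreal (2 powr q * x powr (-p-q)) * ennreal (Fb x) \<le> ennreal (2 powr q/(1-p)) * ennreal (x powr (1-2*p-q))" .
        thus ?thesis using True xh by (simp add: add_increasing2)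
      next
        case False
        hence x0: "x > 0" using h0 by auto
        have "2 powr q * x powr (-p-q) * Fb x = 2 powr q * (1/(1-p) + 1/p) * h powr (1-p) * x powr -(p+q)"
          unfolding Fb_def using False by (simp add: algebra_simps)
        hence "ennreal (2 powr q * x powr (-p-q)) * ennreal (Fb x) = ennreal (2 powr q * (1/(1-p) + 1/p) * h powr (1-p)) * ennreal (x powr -(p+q))"
          using p0 p1 Fb_def False by (simp add: ennreal_mult[symmetric])
        thus ?thesis using True False by (simp add: add_increasing)
      qed
    qed simp
  qed
  also have "\<dots> = ennreal (2 powr q/(1-p)) * ennreal (X/(2-2*p-q)) + ennreal (2 powr q * (1/(1-p) + 1/p) * h powr (1-p)) * P (p+q)"
    unfolding P_def int_small[symmetric] by (subst nn_integral_add) (auto simp: nn_integral_cmult)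
  finally show ?thesis .
qed

end

context kern begin

definition QQ :: ennreal where "QQ = (\<integral>\<^sup>+x. ennreal (g x) * LA x * indicator {0..T} x \<partial>lborel)"
definition cA :: real where "cA = 6/(1-p) + 2 powr (p+2)/(1-q)"
definition cB :: real where "cB = 2 powr q * (1/(1-p) + 1/p)"

lemma Q_total: "QQ \<le> ennreal cA * (ennreal (X/(2-2*p-q)) + ennreal h * P (2*p+q))
   + ennreal (2 powr q/(1-p)) * ennreal (X/(2-2*p-q)) + ennreal (cB * h powr (1-p)) * P (p+q)"
proof -
  have "QQ \<le> ennreal (6/(1-p)) * E1 + (ennreal (2 powr q/(1-p)) * ennreal (X/(2-2*p-q)) + ennreal (cB * h powr (1-p)) * P (p+q))
     + ennreal (2 powr (p+2)/(1-q)) * E1"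
    unfolding QQ_def cB_def using Q_split T1_bound T2_bound T3_bound
    by (meson add_mono order_trans)
  also have "\<dots> = ennreal cA * E1 + ennreal (2 powr q/(1-p)) * ennreal (X/(2-2*p-q)) + ennreal (cB * h powr (1-p)) * P (p+q)"
  proof -
    have "ennreal cA = ennreal (6/(1-p)) + ennreal (2 powr (p+2)/(1-q))"
      unfolding cA_def using p1 q1 by (intro ennreal_plus) auto
    thus ?thesis by (simp add: algebra_simps)
  qed
  also have "\<dots> \<le> ennreal cA * (ennreal (X/(2-2*p-q)) + ennreal h * P (2*p+q))
   + ennreal (2 powr q/(1-p)) * ennreal (X/(2-2*p-q)) + ennreal (cB * h powr (1-p)) * P (p+q)"
    by (intro add_mono mult_left_mono E1_bound) auto
  finally show ?thesis .
qed

lemma comb: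
  assumes R: "0 \<le> R" and a: "0 \<le> a1" "0 \<le> a2" "0 \<le> a3"
    and b1: "X \<le> a1 * R" and b2: "ennreal h * P (2*p+q) \<le> ennreal (a2 * R)"
    and b3: "ennreal (h powr (1-p)) * P (p+q) \<le> ennreal (a3 * R)"
  shows "QQ \<le> ennreal ((cA * (a1/(2-2*p-q) + a2) + 2 powr q/(1-p) * (a1/(2-2*p-q)) + cB * a3) * R)"
proof -
  have d: "0 < 2-2*p-q" using pq by simp
  have cA0: "0 \<le> cA" unfolding cA_def using p1 q1 by auto
  have cB0: "0 \<le> cB" unfolding cB_def using p1 p0 by auto
  have e1: "ennreal (X/(2-2*p-q)) \<le> ennreal (a1/(2-2*p-q) * R)"
    using b1 d by (intro ennreal_leI) (simp add: divide_right_mono)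
  have "QQ \<le> ennreal cA * (ennreal (a1/(2-2*p-q) * R) + ennreal (a2 * R))
   + ennreal (2 powr q/(1-p)) * ennreal (a1/(2-2*p-q) * R) + ennreal cB * ennreal (a3 * R)"
  proof -
    have "ennreal (cB * h powr (1-p)) * P (p+q) = ennreal cB * (ennreal (h powr (1-p)) * P (p+q))"
      using cB0 by (simp add: ennreal_mult mult.assoc)
    also have "\<dots> \<le> ennreal cB * ennreal (a3 * R)" by (intro mult_left_mono b3) auto
    finally have 3: "ennreal (cB * h powr (1-p)) * P (p+q) \<le> ennreal cB * ennreal (a3 * R)" .
    show ?thesis using Q_total 3 e1 b2
      by (meson add_mono mult_left_mono order_trans zero_le)
  qed
  also have "\<dots> = ennreal ((cA * (a1/(2-2*p-q) + a2) + 2 powr q/(1-p) * (a1/(2-2*p-q)) + cB * a3) * R)"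
  proof -
    define u1 where "u1 = a1/(2-2*p-q) * R"
    define u2 where "u2 = a2 * R"
    define u3 where "u3 = a3 * R"
    define c2 where "c2 = 2 powr q/(1-p)"
    have nn: "0 \<le> u1" "0 \<le> u2" "0 \<le> u3" "0 \<le> c2"
      unfolding u1_def u2_def u3_def c2_def using R a d p1 by auto
    have "ennreal (cA*(u1+u2) + c2*u1 + cB*u3) = ennreal (cA*(u1+u2) + c2*u1) + ennreal (cB*u3)"
      using nn cA0 cB0 by (intro ennreal_plus) auto
    also have "ennreal (cA*(u1+u2) + c2*u1) = ennreal (cA*(u1+u2)) + ennreal (c2*u1)"
      using nn cA0 cB0 by (intro ennreal_plus) auto
    also have "ennreal (cA*(u1+u2)) = ennreal cA * ennreal (u1+u2)"
      using nn cA0 by (intro ennreal_mult) auto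
    also have "ennreal (u1+u2) = ennreal u1 + ennreal u2"
      using nn by (intro ennreal_plus) auto
    also have "ennreal (c2*u1) = ennreal c2 * ennreal u1"
      using nn by (intro ennreal_mult) auto
    also have "ennreal (cB*u3) = ennreal cB * ennreal u3"
      using nn cB0 by (intro ennreal_mult) auto
    finally have eq: "ennreal (cA*(u1+u2) + c2*u1 + cB*u3) = ennreal cA * (ennreal u1 + ennreal u2) + ennreal c2 * ennreal u1 + ennreal cB * ennreal u3" .
    have "(cA * (a1/(2-2*p-q) + a2) + 2 powr q/(1-p) * (a1/(2-2*p-q)) + cB * a3) * R = cA*(u1+u2) + c2*u1 + cB*u3"
      unfolding u1_def u2_def u3_def c2_def by (simp add: algebra_simps)
    thus ?thesis using eq unfolding u1_def u2_def u3_def c2_def by simp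
  qed
  finally show ?thesis .
qed

end

context kern begin

lemma P_gt: "e > 1 \<Longrightarrow> P e \<le> ennreal (h powr (1-e)/(e-1))"
proof -
  assume e: "e > 1"
  have "P e = ennreal ((T powr (-e+1) - h powr (-e+1))/(-e+1))"
    unfolding P_def using pintab[of h T "-e"] h0 hT e by simp
  also have "\<dots> \<le> ennreal (h powr (1-e)/(e-1))"
  proof (intro ennreal_leI)
    have "(T powr (-e+1) - h powr (-e+1))/(-e+1) = (h powr (1-e) - T powr (1-e))/(e-1)"
      using e by (simp add: field_simps)
    also have "\<dots> \<le> h powr (1-e)/(e-1)" using e by (intro divide_right_mono) auto
    finally show "(T powr (-e+1) - h powr (-e+1))/(-e+1) \<le> h powr (1-e)/(e-1)" .
  qed
  finally show ?thesis .
qed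

lemma P_lt: "e < 1 \<Longrightarrow> P e \<le> ennreal (T powr (1-e)/(1-e))"
proof -
  assume e: "e < 1"
  have "P e = ennreal ((T powr (-e+1) - h powr (-e+1))/(-e+1))"
    unfolding P_def using pintab[of h T "-e"] h0 hT e by simp
  also have "\<dots> \<le> ennreal (T powr (1-e)/(1-e))"
  proof (intro ennreal_leI)
    have "(T powr (-e+1) - h powr (-e+1))/(-e+1) = (T powr (1-e) - h powr (1-e))/(1-e)"
      using e by (simp add: field_simps)
    also have "\<dots> \<le> T powr (1-e)/(1-e)" using e by (intro divide_right_mono) auto
    finally show "(T powr (-e+1) - h powr (-e+1))/(-e+1) \<le> T powr (1-e)/(1-e)" .
  qed
  finally show ?thesis .
qed

lemma P_eq: "P 1 = ennreal (ln T - ln h)"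
  unfolding P_def using pintln[of h T] h0 hT by simp

lemma R_A: "p + q > 1 \<Longrightarrow> rate (1-q/2) (1-p) T h = X"
  unfolding rate_def X_def by (simp add: algebra_simps)
lemma R_B: "p + q = 1 \<Longrightarrow> rate (1-q/2) (1-p) T h = max \<bar>ln h\<bar> (ln T) * h powr q"
  unfolding rate_def by (simp add: algebra_simps)
lemma R_C: "p + q < 1 \<Longrightarrow> rate (1-q/2) (1-p) T h = h powr (1-p)"
  unfolding rate_def by (simp add: algebra_simps)

lemma M_lb: "h \<le> T/2 \<Longrightarrow> ln 2 / 2 \<le> max \<bar>ln h\<bar> (ln T)"
proof -
  assume hh: "h \<le> T/2"
  have "ln 2 \<le> ln (T/h)" using hh h0 by (subst ln_le_cancel_iff) (auto simp: field_simps)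
  also have "ln (T/h) = ln T - ln h" using h0 hT by (simp add: ln_div)
  finally show ?thesis by linarith
qed

lemma X_C: "p + q < 1 \<Longrightarrow> X \<le> T powr (1-p-q) * h powr (1-p)"
proof -
  assume c: "p + q < 1"
  have "X = h powr (1-p-q) * h powr (1-p)" unfolding X_def by (subst powr_add[symmetric]) (simp add: algebra_simps)
  also have "\<dots> \<le> T powr (1-p-q) * h powr (1-p)" using c h0 hT by (intro mult_right_mono powr_mono2) auto
  finally show ?thesis .
qed

end

definition aa1 :: "real \<Rightarrow> real \<Rightarrow> real \<Rightarrow> real" where
  "aa1 p q T = (if p+q>1 then 1 else if p+q=1 then 2/ln 2 else T powr (1-p-q))"
definition aa2 :: "real \<Rightarrow> real \<Rightarrow> real \<Rightarrow> real" where
  "aa2 p q T = (if p+q>1 then 1/(2*p+q-1) else if p+q=1 then 2/(p*ln 2)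
     else if 2*p+q>1 then T powr (1-p-q)/(2*p+q-1)
     else if 2*p+q<1 then T powr p * (T powr (1-2*p-q)/(1-2*p-q)) else T powr p/p)"
definition aa3 :: "real \<Rightarrow> real \<Rightarrow> real \<Rightarrow> real" where
  "aa3 p q T = (if p+q>1 then 1/(p+q-1) else if p+q=1 then 2 else T powr (1-p-q)/(1-p-q))"

context kern begin

abbreviation "R \<equiv> rate (1-q/2) (1-p) T h"

lemma aa_nn: "0 \<le> aa1 p q T" "0 \<le> aa2 p q T" "0 \<le> aa3 p q T"
  unfolding aa1_def aa2_def aa3_def using p0 p1 by auto

lemma R_nn: "0 \<le> R"
  unfolding rate_def using h0 by auto

lemma b1: assumes hh: "h \<le> T/2" shows "X \<le> aa1 p q T * R"
proof -
  consider "p+q>1" | "p+q=1" | "p+q<1" by linarith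
  thus ?thesis
  proof cases
    case 1 thus ?thesis using R_A unfolding aa1_def by simp
  next
    case 2
    have ee: "2-2*p-q = q" using 2 by simp
    have "X = h powr q" unfolding X_def ee by (rule refl)
    moreover have "1 \<le> 2/ln 2 * max \<bar>ln h\<bar> (ln T)" using M_lb[OF hh] by (simp add: field_simps)
    ultimately have "X \<le> 2/ln 2 * max \<bar>ln h\<bar> (ln T) * h powr q"
      using mult_right_mono[of 1 "2/ln 2 * max \<bar>ln h\<bar> (ln T)" "h powr q"] by simp
    thus ?thesis using 2 R_B unfolding aa1_def by simp
  next
    case 3 thus ?thesis using R_C X_C unfolding aa1_def by simp
  qed
qed

lemma b3: assumes hh: "h \<le> T/2" shows "ennreal (h powr (1-p)) * P (p+q) \<le> ennreal (aa3 p q T * R)"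
proof -
  consider "p+q>1" | "p+q=1" | "p+q<1" by linarith
  thus ?thesis
  proof cases
    case 1
    have "ennreal (h powr (1-p)) * P (p+q) \<le> ennreal (h powr (1-p)) * ennreal (h powr (1-(p+q))/((p+q)-1))"
      using P_gt[OF 1] by (intro mult_left_mono) auto
    also have "\<dots> = ennreal (h powr (1-p) * (h powr (1-(p+q))/((p+q)-1)))"
      using 1 by (intro ennreal_mult[symmetric]) auto
    also have "h powr (1-p) * (h powr (1-(p+q))/((p+q)-1)) = X / (p+q-1)"
      unfolding X_def by (subst times_divide_eq_right, subst powr_add[symmetric]) (simp add: algebra_simps)
    finally show ?thesis using 1 R_A unfolding aa3_def by simp
  next
    case 2
    have "ennreal (h powr (1-p)) * P (p+q) = ennreal (h powr (1-p)) * ennreal (ln T - ln h)"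
      using 2 P_eq by simp
    also have "\<dots> = ennreal (h powr (1-p) * (ln T - ln h))"
      using h0 hT by (intro ennreal_mult[symmetric]) auto
    also have "\<dots> \<le> ennreal (2 * (max \<bar>ln h\<bar> (ln T) * h powr q))"
    proof (intro ennreal_leI)
      have "1 - p = q" using 2 by simp
      moreover have "ln T - ln h \<le> 2 * max \<bar>ln h\<bar> (ln T)" by linarith
      ultimately show "h powr (1-p) * (ln T - ln h) \<le> 2 * (max \<bar>ln h\<bar> (ln T) * h powr q)"
        using mult_left_mono[of "ln T - ln h" "2 * max \<bar>ln h\<bar> (ln T)" "h powr q"] by (simp add: mult_ac)
    qed
    finally show ?thesis using 2 R_B unfolding aa3_def by simp
  next
    case 3
    have "ennreal (h powr (1-p)) * P (p+q) \<le> ennreal (h powr (1-p)) * ennreal (T powr (1-(p+q))/(1-(p+q)))"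
      using P_lt[OF 3] by (intro mult_left_mono) auto
    also have "\<dots> = ennreal (T powr (1-p-q)/(1-p-q) * h powr (1-p))"
      using 3 by (subst ennreal_mult[symmetric]) (auto simp: algebra_simps)
    finally show ?thesis using 3 R_C unfolding aa3_def by simp
  qed
qed

lemma b2: assumes hh: "h \<le> T/2" shows "ennreal h * P (2*p+q) \<le> ennreal (aa2 p q T * R)"
proof -
  have gt: "ennreal h * P (2*p+q) \<le> ennreal (X/(2*p+q-1))" if e: "2*p+q > 1"
  proof -
    have "ennreal h * P (2*p+q) \<le> ennreal h * ennreal (h powr (1-(2*p+q))/((2*p+q)-1))"
      using P_gt[OF e] by (intro mult_left_mono) auto
    also have "\<dots> = ennreal (h * (h powr (1-(2*p+q))/((2*p+q)-1)))"
      using e h0 by (intro ennreal_mult[symmetric]) auto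
    also have "h * (h powr (1-(2*p+q))/((2*p+q)-1)) = X/(2*p+q-1)"
    proof -
      have "h * h powr (1-(2*p+q)) = h powr (1 + (1-(2*p+q)))" using h0 by (subst powr_add) simp
      also have "1 + (1-(2*p+q)) = 2-2*p-q" by simp
      finally show ?thesis unfolding X_def by simp
    qed
    finally show ?thesis .
  qed
  consider "p+q>1" | "p+q=1" | "p+q<1" by linarith
  thus ?thesis
  proof cases
    case 1
    hence "2*p+q>1" using p0 by simp
    from gt[OF this] show ?thesis using 1 R_A unfolding aa2_def by simp
  next
    case 2
    hence e: "2*p+q>1" using p0 by simp
    have ee: "2-2*p-q = q" using 2 by simp
    have "X = h powr q" unfolding X_def ee by (rule refl)
    have "X/(2*p+q-1) = h powr q / p" using 2 \<open>X = h powr q\<close> by (simp add: algebra_simps)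
    also have "\<dots> \<le> 2/(p*ln 2) * (max \<bar>ln h\<bar> (ln T) * h powr q)"
    proof -
      have "1 \<le> 2/ln 2 * max \<bar>ln h\<bar> (ln T)" using M_lb[OF hh] by (simp add: field_simps)
      hence "h powr q \<le> 2/ln 2 * max \<bar>ln h\<bar> (ln T) * h powr q"
        using mult_right_mono[of 1 "2/ln 2 * max \<bar>ln h\<bar> (ln T)" "h powr q"] by simp
      hence "h powr q / p \<le> (2/ln 2 * max \<bar>ln h\<bar> (ln T) * h powr q) / p" using p0 by (intro divide_right_mono) auto
      thus ?thesis by (simp add: field_simps)
    qed
    finally have "ennreal (X/(2*p+q-1)) \<le> ennreal (2/(p*ln 2) * (max \<bar>ln h\<bar> (ln T) * h powr q))" by (rule ennreal_leI)
    with gt[OF e] show ?thesis using 2 R_B unfolding aa2_def by simp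
  next
    case 3
    consider "2*p+q>1" | "2*p+q<1" | "2*p+q=1" by linarith
    thus ?thesis
    proof cases
      case 4: 1
      have "X/(2*p+q-1) \<le> T powr (1-p-q) * h powr (1-p)/(2*p+q-1)"
        using X_C[OF 3] 4 by (intro divide_right_mono) auto
      hence "ennreal (X/(2*p+q-1)) \<le> ennreal (T powr (1-p-q)/(2*p+q-1) * h powr (1-p))" by (intro ennreal_leI) simp
      from order_trans[OF gt[OF 4] this] show ?thesis using 3 4 R_C unfolding aa2_def by simp
    next
      case 4: 2
      have "ennreal h * P (2*p+q) \<le> ennreal h * ennreal (T powr (1-(2*p+q))/(1-(2*p+q)))"
        using P_lt[OF 4] by (intro mult_left_mono) auto
      also have "\<dots> = ennreal (h * (T powr (1-(2*p+q))/(1-(2*p+q))))"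
        using 4 h0 by (intro ennreal_mult[symmetric]) auto
      also have "\<dots> \<le> ennreal (T powr p * (T powr (1-2*p-q)/(1-2*p-q)) * h powr (1-p))"
      proof (intro ennreal_leI)
        have "h = h powr p * h powr (1-p)" using h0 by (simp add: powr_add[symmetric])
        also have "\<dots> \<le> T powr p * h powr (1-p)" using h0 hT p0 by (intro mult_right_mono powr_mono2) auto
        finally have "h \<le> T powr p * h powr (1-p)" .
        hence "h * (T powr (1-(2*p+q))/(1-(2*p+q))) \<le> T powr p * h powr (1-p) * (T powr (1-(2*p+q))/(1-(2*p+q)))"
          using 4 by (intro mult_right_mono) auto
        thus "h * (T powr (1-(2*p+q))/(1-(2*p+q))) \<le> T powr p * (T powr (1-2*p-q)/(1-2*p-q)) * h powr (1-p)"
          by (simp add: algebra_simps)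
      qed
      finally show ?thesis using 3 4 R_C unfolding aa2_def by simp
    next
      case 4: 3
      have "ennreal h * P (2*p+q) = ennreal h * ennreal (ln T - ln h)" using 4 P_eq by simp
      also have "\<dots> = ennreal (h * (ln T - ln h))"
        using h0 hT by (intro ennreal_mult[symmetric]) auto
      also have "\<dots> \<le> ennreal (T powr p / p * h powr (1-p))"
      proof (intro ennreal_leI)
        have "ln T - ln h = ln (T/h)" using h0 hT by (simp add: ln_div)
        also have "\<dots> = ln ((T/h) powr p) / p" using h0 hT p0 by (simp add: ln_powr)
        also have "\<dots> \<le> (T/h) powr p / p"
        proof -
          have "ln ((T/h) powr p) \<le> (T/h) powr p - 1" using h0 hT by (intro ln_le_minus_one) auto
          thus ?thesis using p0 by (intro divide_right_mono) auto
        qed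
        finally have "h * (ln T - ln h) \<le> h * ((T/h) powr p / p)" using h0 by (intro mult_left_mono) auto
        also have "h * ((T/h) powr p / p) = T powr p / p * h powr (1-p)"
          using h0 hT by (simp add: powr_divide powr_diff field_simps)
        finally show "h * (ln T - ln h) \<le> T powr p / p * h powr (1-p)" .
      qed
      finally show ?thesis using 3 4 R_C unfolding aa2_def by simp
    qed
  qed
qed

end

definition KK :: "real \<Rightarrow> real \<Rightarrow> real \<Rightarrow> real" where
  "KK p q T = (6/(1-p) + 2 powr (p+2)/(1-q)) * (aa1 p q T/(2-2*p-q) + aa2 p q T)
     + 2 powr q/(1-p) * (aa1 p q T/(2-2*p-q)) + 2 powr q * (1/(1-p) + 1/p) * aa3 p q T"

context kern begin

lemma QQ_bound: "h \<le> T/2 \<Longrightarrow> QQ \<le> ennreal (KK p q T * R)"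
  using comb[OF R_nn aa_nn b1 b2 b3] unfolding KK_def cA_def cB_def by simp

lemma I1_bound:
  assumes e: "0 \<le> \<eta>" "\<eta> \<le> T" and a: "0 \<le> a" "a \<le> \<tau>" "\<tau> \<le> T" "\<tau> - a \<le> h"
  shows "(\<integral>\<^sup>+r\<in>{0..\<eta>}. (\<integral>\<^sup>+v\<in>{a..\<tau>}. ennreal (g (\<eta>-r) * g (\<tau>-v) * k \<bar>v-r\<bar>) \<partial>lborel) \<partial>lborel) \<le> 3 * QQ"
proof -
  have "(\<integral>\<^sup>+r\<in>{0..\<eta>}. (\<integral>\<^sup>+v\<in>{a..\<tau>}. ennreal (g (\<eta>-r) * g (\<tau>-v) * k \<bar>v-r\<bar>) \<partial>lborel) \<partial>lborel)
     \<le> (\<integral>\<^sup>+r. ennreal (g (\<eta> - r)) * LA \<bar>\<tau> - r\<bar> * indicator {0..\<eta>} r \<partial>lborel)"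
  proof (intro nn_integral_mono)
    fix r
    show "(\<integral>\<^sup>+v\<in>{a..\<tau>}. ennreal (g (\<eta>-r) * g (\<tau>-v) * k \<bar>v-r\<bar>) \<partial>lborel) * indicator {0..\<eta>} r
      \<le> ennreal (g (\<eta> - r)) * LA \<bar>\<tau> - r\<bar> * indicator {0..\<eta>} r"
    proof (cases "r \<in> {0..\<eta>}")
      case True
      have "(\<integral>\<^sup>+v\<in>{a..\<tau>}. ennreal (g (\<eta>-r) * g (\<tau>-v) * k \<bar>v-r\<bar>) \<partial>lborel)
          = (\<integral>\<^sup>+v. ennreal (g (\<eta>-r)) * (ennreal (f (\<tau>-v) * k \<bar>v-r\<bar>) * indicator {a..\<tau>} v) \<partial>lborel)"
      proof (intro nn_integral_cong)
        fix v show "ennreal (g (\<eta>-r) * g (\<tau>-v) * k \<bar>v-r\<bar>) * indicator {a..\<tau>} v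
          = ennreal (g (\<eta>-r)) * (ennreal (f (\<tau>-v) * k \<bar>v-r\<bar>) * indicator {a..\<tau>} v)"
        proof (cases "v \<in> {a..\<tau>}")
          case True
          hence "f (\<tau>-v) = g (\<tau>-v)" unfolding g_def using a by (intro f_small) auto
          thus ?thesis using True g_nn k_nn by (simp add: ennreal_mult mult.assoc)
        qed simp
      qed
      also have "\<dots> = ennreal (g (\<eta>-r)) * (\<integral>\<^sup>+v. ennreal (f (\<tau>-v) * k \<bar>v-r\<bar>) * indicator {a..\<tau>} v \<partial>lborel)"
        by (subst nn_integral_cmult) auto
      also have "\<dots> \<le> ennreal (g (\<eta>-r)) * LA \<bar>\<tau> - r\<bar>"
        using True e a by (intro mult_left_mono inner_bound) auto
      finally show ?thesis using True by simp
    qed simp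
  qed
  also have "\<dots> \<le> 3 * QQ" unfolding QQ_def using e a by (intro outer_bound) auto
  finally show ?thesis .
qed

lemma I2_bound:
  assumes e: "0 \<le> \<eta>" "\<eta> \<le> T" and a: "0 \<le> a" "a < \<tau>" "\<tau> \<le> T" "\<tau> - a \<le> h"
  shows "(\<integral>\<^sup>+r\<in>{0..\<eta>}. (\<integral>\<^sup>+v\<in>{0..a}. ennreal (g (\<eta>-r) * (g (a-v) - g (\<tau>-v)) * k \<bar>v-r\<bar>) \<partial>lborel) \<partial>lborel) \<le> 3 * QQ"
proof -
  have "(\<integral>\<^sup>+r\<in>{0..\<eta>}. (\<integral>\<^sup>+v\<in>{0..a}. ennreal (g (\<eta>-r) * (g (a-v) - g (\<tau>-v)) * k \<bar>v-r\<bar>) \<partial>lborel) \<partial>lborel)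
     \<le> (\<integral>\<^sup>+r. ennreal (g (\<eta> - r)) * LA \<bar>a - r\<bar> * indicator {0..\<eta>} r \<partial>lborel)"
  proof (intro nn_integral_mono)
    fix r
    show "(\<integral>\<^sup>+v\<in>{0..a}. ennreal (g (\<eta>-r) * (g (a-v) - g (\<tau>-v)) * k \<bar>v-r\<bar>) \<partial>lborel) * indicator {0..\<eta>} r
      \<le> ennreal (g (\<eta> - r)) * LA \<bar>a - r\<bar> * indicator {0..\<eta>} r"
    proof (cases "r \<in> {0..\<eta>}")
      case True
      have "(\<integral>\<^sup>+v\<in>{0..a}. ennreal (g (\<eta>-r) * (g (a-v) - g (\<tau>-v)) * k \<bar>v-r\<bar>) \<partial>lborel)
          \<le> (\<integral>\<^sup>+v. ennreal (g (\<eta>-r)) * (ennreal (f (a-v) * k \<bar>v-r\<bar>) * indicator {0..a} v) \<partial>lborel)"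
      proof (intro nn_integral_mono)
        fix v show "ennreal (g (\<eta>-r) * (g (a-v) - g (\<tau>-v)) * k \<bar>v-r\<bar>) * indicator {0..a} v
          \<le> ennreal (g (\<eta>-r)) * (ennreal (f (a-v) * k \<bar>v-r\<bar>) * indicator {0..a} v)"
        proof (cases "v \<in> {0..a}")
          case True
          have w: "g (a-v) - g (\<tau>-v) \<le> f (a-v)"
            using w_le_f[of "a-v" "\<tau>-a"] True a unfolding g_def by auto
          have "g (\<eta>-r) * (g (a-v) - g (\<tau>-v)) * k \<bar>v-r\<bar> \<le> g (\<eta>-r) * f (a-v) * k \<bar>v-r\<bar>"
            using w g_nn k_nn by (intro mult_right_mono mult_left_mono) auto
          hence "ennreal (g (\<eta>-r) * (g (a-v) - g (\<tau>-v)) * k \<bar>v-r\<bar>) \<le> ennreal (g (\<eta>-r) * f (a-v) * k \<bar>v-r\<bar>)"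
            by (rule ennreal_leI)
          also have "\<dots> = ennreal (g (\<eta>-r)) * ennreal (f (a-v) * k \<bar>v-r\<bar>)"
            using True g_nn k_nn f_nn[of "a-v"] by (simp add: ennreal_mult mult.assoc)
          finally show ?thesis using True by simp
        qed simp
      qed
      also have "\<dots> = ennreal (g (\<eta>-r)) * (\<integral>\<^sup>+v. ennreal (f (a-v) * k \<bar>v-r\<bar>) * indicator {0..a} v \<partial>lborel)"
        by (subst nn_integral_cmult) auto
      also have "\<dots> \<le> ennreal (g (\<eta>-r)) * LA \<bar>a - r\<bar>"
        using True e a by (intro mult_left_mono inner_bound) auto
      finally show ?thesis using True by simp
    qed simp
  qed
  also have "\<dots> \<le> 3 * QQ" unfolding QQ_def using e a by (intro outer_bound) auto
  finally show ?thesis .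
qed

end

theorem lemma3p6:
  fixes H \<alpha> T :: real
  assumes "1/2 < H" "H < 1" "1 - H < \<alpha>" "\<alpha> < 1" "0 < T"
  shows "\<exists>C::real. \<forall>N::nat. \<forall>\<eta> j \<tau>.
     N \<ge> 2 \<longrightarrow> \<eta> \<in> {0..T} \<longrightarrow> 1 \<le> j \<longrightarrow> j \<le> N \<longrightarrow>
     \<tau> \<in> {(real j - 1) * (T / real N) <.. real j * (T / real N)} \<longrightarrow>
     (\<integral>\<^sup>+ r\<in>{0..\<eta>}. (\<integral>\<^sup>+ v\<in>{(real j - 1) * (T / real N)..\<tau>}.
          ennreal ((\<eta> - r) powr (\<alpha> - 1) * (\<tau> - v) powr (\<alpha> - 1) * \<bar>v - r\<bar> powr (2*H - 2))
        \<partial>lborel) \<partial>lborel)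
       \<le> ennreal (C * rate H \<alpha> T (T / real N))
     \<and>
     (\<integral>\<^sup>+ r\<in>{0..\<eta>}. (\<integral>\<^sup>+ v\<in>{0..(real j - 1) * (T / real N)}.
          ennreal ((\<eta> - r) powr (\<alpha> - 1) *
            (((real j - 1) * (T / real N) - v) powr (\<alpha> - 1) - (\<tau> - v) powr (\<alpha> - 1)) *
            \<bar>v - r\<bar> powr (2*H - 2))
        \<partial>lborel) \<partial>lborel)
       \<le> ennreal (C * rate H \<alpha> T (T / real N))"
proof -
  define p where "p = 1 - \<alpha>"
  define q where "q = 2 - 2*H"
  have pq: "0 < p" "p < 1" "0 < q" "q < 1" "2*p + q < 2" using assms by (auto simp: p_def q_def)
  show ?thesis
  proof (intro exI[of _ "3 * KK p q T"] allI impI)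
    fix N :: nat and \<eta> :: real and j :: nat and \<tau> :: real
    assume N: "N \<ge> 2" and e: "\<eta> \<in> {0..T}" and j: "1 \<le> j" "j \<le> N"
      and \<tau>: "\<tau> \<in> {(real j - 1) * (T / real N) <.. real j * (T / real N)}"
    define h where "h = T / real N"
    have h0: "0 < h" using N assms by (simp add: h_def)
    have hT2: "h \<le> T/2" using N assms by (simp add: h_def field_simps)
    hence hT: "h \<le> T" using assms by simp
    interpret K: kern p q h T using pq h0 hT by unfold_locales auto
    define a where "a = (real j - 1) * h"
    have a0: "0 \<le> a" using j h0 by (simp add: a_def)
    have at1: "a < \<tau>" using \<tau> by (simp add: a_def h_def)
    have "real j * h = a + h" by (simp add: a_def algebra_simps)
    hence at2: "\<tau> - a \<le> h" using \<tau> by (simp add: h_def)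
    note at = at1 at2
    have "\<tau> \<le> real j * h" using \<tau> by (simp add: h_def)
    also have "\<dots> \<le> real N * h" using j h0 by (intro mult_right_mono) auto
    also have "\<dots> = T" using N by (simp add: h_def)
    finally have tT: "\<tau> \<le> T" .
    have gk: "\<And>x. K.g x = x powr (\<alpha> - 1)" "\<And>x. K.k x = x powr (2*H - 2)"
      by (simp_all add: K.g_def K.k_def) (simp_all add: p_def q_def)
    have "1 - q/2 = H" "1 - p = \<alpha>" by (simp_all add: p_def q_def field_simps)
    hence Req: "rate (1 - q/2) (1-p) T h = rate H \<alpha> T h" by simp
    have QB: "3 * K.QQ \<le> ennreal (3 * KK p q T * rate H \<alpha> T h)"
    proof -
      have "3 * K.QQ \<le> 3 * ennreal (KK p q T * rate H \<alpha> T h)"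
        using K.QQ_bound[OF hT2] Req by (intro mult_left_mono) auto
      also have "\<dots> = ennreal (3 * KK p q T * rate H \<alpha> T h)"
        by (simp add: ennreal_mult' mult.assoc)
      finally show ?thesis .
    qed
    have I1: "(\<integral>\<^sup>+r\<in>{0..\<eta>}. (\<integral>\<^sup>+v\<in>{a..\<tau>}. ennreal (K.g (\<eta>-r) * K.g (\<tau>-v) * K.k \<bar>v-r\<bar>) \<partial>lborel) \<partial>lborel) \<le> 3 * K.QQ"
      using e a0 at tT by (intro K.I1_bound) auto
    have I2: "(\<integral>\<^sup>+r\<in>{0..\<eta>}. (\<integral>\<^sup>+v\<in>{0..a}. ennreal (K.g (\<eta>-r) * (K.g (a-v) - K.g (\<tau>-v)) * K.k \<bar>v-r\<bar>) \<partial>lborel) \<partial>lborel) \<le> 3 * K.QQ"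
      using e a0 at tT by (intro K.I2_bound) auto
    show "(\<integral>\<^sup>+ r\<in>{0..\<eta>}. (\<integral>\<^sup>+ v\<in>{(real j - 1) * (T / real N)..\<tau>}.
          ennreal ((\<eta> - r) powr (\<alpha> - 1) * (\<tau> - v) powr (\<alpha> - 1) * \<bar>v - r\<bar> powr (2*H - 2))
        \<partial>lborel) \<partial>lborel)
       \<le> ennreal (3 * KK p q T * rate H \<alpha> T (T / real N))
     \<and>
     (\<integral>\<^sup>+ r\<in>{0..\<eta>}. (\<integral>\<^sup>+ v\<in>{0..(real j - 1) * (T / real N)}.
          ennreal ((\<eta> - r) powr (\<alpha> - 1) *
            (((real j - 1) * (T / real N) - v) powr (\<alpha> - 1) - (\<tau> - v) powr (\<alpha> - 1)) *
            \<bar>v - r\<bar> powr (2*H - 2))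
        \<partial>lborel) \<partial>lborel)
       \<le> ennreal (3 * KK p q T * rate H \<alpha> T (T / real N))"
      using order_trans[OF I1 QB] order_trans[OF I2 QB] unfolding gk a_def h_def by simp
  qed
qed

end
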